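(* Let $F$ be a connected graph of order at least $2$ with vertices $x_1,\dots,x_{|V(F)|}$. For each $i$, take a new graph $T_i\in\{C_{4,2},C_{5,1}\}$ (all vertex-disjoint from each other and from $F$) and identify the leaf of $T_i$ with $x_i$; call the resulting graph $G_F$. Then $\gamma^{d}_2(G_F)=\frac{|V(G_F)|}{3}$.
   Context: All graphs are finite and simple. A set $S$ of vertices of a graph $G$ is a disjunctive dominating set of $G$ if every vertex not in $S$ is adjacent to a vertex of $S$ or has at least two vertices of $S$ at distance exactly $2$ from it in $G$. The disjunctive domination number $\gamma^{d}_2(G)$ is the minimum cardinality of a disjunctive dominating set of $G$. For $s\geq 3$ and $t\geq 1$, $C_{s,t}$ denotes the graph obtained from a cycle $C_s$ and a path with $t$ edges by identifying one end vertex of the path with a vertex of the cycle; the other end vertex of the path (of degree $1$) is called the leaf of $C_{s,t}$. Thus $C_{4,2}$ and $C_{5,1}$ each have $6$ vertices. *)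

theory Defs
  imports Complex_Main
begin

definition simple_graph :: "'v set \<Rightarrow> ('v \<Rightarrow> 'v \<Rightarrow> bool) \<Rightarrow> bool" where
  "simple_graph V E \<longleftrightarrow> finite V \<and> (\<forall>u v. E u v \<longrightarrow> u \<in> V \<and> v \<in> V)
     \<and> (\<forall>u v. E u v \<longrightarrow> E v u) \<and> (\<forall>u. \<not> E u u)"

definition connected_graph :: "'v set \<Rightarrow> ('v \<Rightarrow> 'v \<Rightarrow> bool) \<Rightarrow> bool" where
  "connected_graph V E \<longleftrightarrow> V \<noteq> {} \<and>
     (\<forall>u\<in>V. \<forall>v\<in>V. (\<lambda>a b. E a b \<and> a \<in> V \<and> b \<in> V)\<^sup>*\<^sup>* u v)"

definition dist2 :: "'v set \<Rightarrow> ('v \<Rightarrow> 'v \<Rightarrow> bool) \<Rightarrow> 'v \<Rightarrow> 'v \<Rightarrow> bool" where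
  "dist2 V E u v \<longleftrightarrow> u \<noteq> v \<and> \<not> E u v \<and> (\<exists>w\<in>V. E u w \<and> E w v)"

definition disj_dom_set :: "'v set \<Rightarrow> ('v \<Rightarrow> 'v \<Rightarrow> bool) \<Rightarrow> 'v set \<Rightarrow> bool" where
  "disj_dom_set V E S \<longleftrightarrow> S \<subseteq> V \<and>
     (\<forall>v \<in> V - S. (\<exists>s\<in>S. E v s) \<or> card {s\<in>S. dist2 V E v s} \<ge> 2)"

definition disj_dom_num :: "'v set \<Rightarrow> ('v \<Rightarrow> 'v \<Rightarrow> bool) \<Rightarrow> nat" where
  "disj_dom_num V E = (LEAST n. \<exists>S. disj_dom_set V E S \<and> card S = n)"

text \<open>C_{s,t}: vertices 0..s+t-1; cycle 0-1-...-(s-1)-0; path 0 - s - (s+1) - ... - (s+t-1).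
  The leaf is s+t-1.\<close>
definition cst_edge :: "nat \<Rightarrow> nat \<Rightarrow> nat \<Rightarrow> nat \<Rightarrow> bool" where
  "cst_edge s t i j \<longleftrightarrow> i < s + t \<and> j < s + t \<and>
     ( (i < s \<and> j < s \<and> (j = (i + 1) mod s \<or> i = (j + 1) mod s))
     \<or> (t \<ge> 1 \<and> ((i = 0 \<and> j = s) \<or> (j = 0 \<and> i = s)))
     \<or> (i \<ge> s \<and> j \<ge> s \<and> (j = i + 1 \<or> i = j + 1)))"

definition cst_leaf :: "nat \<Rightarrow> nat \<Rightarrow> nat" where
  "cst_leaf s t = s + t - 1"

text \<open>G_F: for each vertex x of F, a copy of C_{s,t} with (s,t) = T x, whose leaf is
  identified with x.  Vertex Inl x is x itself; Inr (x,j) for j < s+t-1 is the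
  non-leaf vertex j of the copy attached at x.\<close>
definition GF_V :: "'a set \<Rightarrow> ('a \<Rightarrow> nat \<times> nat) \<Rightarrow> ('a + 'a \<times> nat) set" where
  "GF_V V T = Inl ` V \<union> {Inr (x, j) | x j. x \<in> V \<and> j < cst_leaf (fst (T x)) (snd (T x))}"

fun GF_E :: "'a set \<Rightarrow> ('a \<Rightarrow> 'a \<Rightarrow> bool) \<Rightarrow> ('a \<Rightarrow> nat \<times> nat)
             \<Rightarrow> ('a + 'a \<times> nat) \<Rightarrow> ('a + 'a \<times> nat) \<Rightarrow> bool" where
  "GF_E V E T (Inl x) (Inl y) = E x y"
| "GF_E V E T (Inr (x, i)) (Inr (y, j)) = (x = y \<and> x \<in> V \<and>
      cst_edge (fst (T x)) (snd (T x)) i j \<and>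
      i < cst_leaf (fst (T x)) (snd (T x)) \<and> j < cst_leaf (fst (T x)) (snd (T x)))"
| "GF_E V E T (Inl x) (Inr (y, j)) = (x = y \<and> x \<in> V \<and>
      j < cst_leaf (fst (T x)) (snd (T x)) \<and>
      cst_edge (fst (T x)) (snd (T x)) (cst_leaf (fst (T x)) (snd (T x))) j)"
| "GF_E V E T (Inr (y, j)) (Inl x) = (x = y \<and> x \<in> V \<and>
      j < cst_leaf (fst (T x)) (snd (T x)) \<and>
      cst_edge (fst (T x)) (snd (T x)) (cst_leaf (fst (T x)) (snd (T x))) j)"

end

theory Submission imports Defs begin

definition att :: "nat \<times> nat \<Rightarrow> nat" where "att p = (if p = (4,2) then 4 else 0)"

definition blk :: "'a \<Rightarrow> ('a + 'a \<times> nat) set" where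
  "blk x = insert (Inl x) (Inr ` ({x} \<times> {..<5}))"

lemma lt5: "(k::nat) < 5 \<longleftrightarrow> k=0 \<or> k=1 \<or> k=2 \<or> k=3 \<or> k=4" by auto

lemma leaf5: "T x \<in> {(4,2),(5,1)} \<Longrightarrow> cst_leaf (fst (T x)) (snd (T x)) = 5"
  by (auto simp: cst_leaf_def)

lemma E_Inr:
  assumes T: "T x \<in> {(4,2),(5,1)}" and e: "GF_E V E T (Inr (x,i)) w"
  shows "w \<in> blk x"
proof (cases w)
  case (Inl y) with e show ?thesis by (auto simp: blk_def)
next
  case (Inr p)
  then obtain y j where p: "w = Inr (y,j)" by (cases p) auto
  with e leaf5[where T=T and x=x, OF T] show ?thesis by (auto simp: blk_def)
qed

lemma Inr_Inl:
  assumes T: "T x \<in> {(4,2),(5,1)}" and e: "GF_E V E T (Inr (x,i)) (Inl y)"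
  shows "y = x \<and> i = att (T x)"
  using assms by (auto simp: cst_edge_def cst_leaf_def att_def)

lemma pick:
  assumes T: "T x \<in> {(4,2),(5,1)}"
  shows "\<exists>j<5. j \<noteq> att (T x) \<and> Inr (x,j) \<noteq> b \<and> \<not> GF_E V E T (Inr (x,j)) b"
proof (cases "b \<in> blk x")
  case False
  define j where "j = (if T x = (4,2) then 0 else 1::nat)"
  have "j < 5" "j \<noteq> att (T x)" using T by (auto simp: j_def att_def)
  moreover have "Inr (x,j) \<noteq> b" using False \<open>j<5\<close> by (auto simp: blk_def)
  moreover have "\<not> GF_E V E T (Inr (x,j)) b" using False E_Inr[where T=T and x=x, OF T] by blast
  ultimately show ?thesis by blast
next
  case True
  then consider "b = Inl x" | k where "k < 5" "b = Inr (x,k)" by (auto simp: blk_def)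
  then show ?thesis
  proof cases
    case 1
    show ?thesis
    proof (cases "T x = (4,2)")
      case True
      show ?thesis using True 1 by (intro exI[of _ 1]) (simp add: att_def cst_edge_def cst_leaf_def)
    next
      case False
      then have "T x = (5,1)" using T by auto
      then show ?thesis using 1 by (intro exI[of _ 2]) (simp add: att_def cst_edge_def cst_leaf_def)
    qed
  next
    case 2
    show ?thesis
    proof (cases "T x = (4,2)")
      case True
      have "k=0 \<or> k=1 \<or> k=2 \<or> k=3 \<or> k=4" using 2 by auto
      then show ?thesis using True 2
        apply (elim disjE)
        subgoal by (intro exI[of _ 2]) (simp add: att_def cst_edge_def cst_leaf_def)
        subgoal by (intro exI[of _ 3]) (simp add: att_def cst_edge_def cst_leaf_def)
        subgoal by (intro exI[of _ 0]) (simp add: att_def cst_edge_def cst_leaf_def)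
        subgoal by (intro exI[of _ 1]) (simp add: att_def cst_edge_def cst_leaf_def)
        subgoal by (intro exI[of _ 2]) (simp add: att_def cst_edge_def cst_leaf_def)
        done
    next
      case False
      then have TT: "T x = (5,1)" using T by auto
      have "k=0 \<or> k=1 \<or> k=2 \<or> k=3 \<or> k=4" using 2 by auto
      then show ?thesis using TT 2
        apply (elim disjE)
        subgoal by (intro exI[of _ 2]) (simp add: att_def cst_edge_def cst_leaf_def)
        subgoal by (intro exI[of _ 3]) (simp add: att_def cst_edge_def cst_leaf_def)
        subgoal by (intro exI[of _ 4]) (simp add: att_def cst_edge_def cst_leaf_def)
        subgoal by (intro exI[of _ 1]) (simp add: att_def cst_edge_def cst_leaf_def)
        subgoal by (intro exI[of _ 2]) (simp add: att_def cst_edge_def cst_leaf_def)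
        done
    qed
  qed
qed

lemma le1_sub:
  assumes "finite A" "card A \<le> 1" shows "\<exists>b. A \<subseteq> {b}"
proof (cases "A = {}")
  case False
  then obtain a where "a \<in> A" by blast
  have "card A \<le> Suc 0" using assms by simp
  then have "\<forall>c\<in>A. c = a" using assms(1) card_le_Suc0_iff_eq[of A] \<open>a \<in> A\<close> by blast
  then show ?thesis by blast
qed auto

lemma gadget:
  assumes T: "T x \<in> {(4,2),(5,1)}" and x: "x \<in> V"
    and S: "disj_dom_set (GF_V V T) (GF_E V E T) S" and fin: "finite S"
  shows "2 \<le> card (S \<inter> blk x)"
proof (rule ccontr)
  assume "\<not> ?thesis"
  then have "card (S \<inter> blk x) \<le> 1" by simp
  moreover have "finite (S \<inter> blk x)" using fin by simp
  ultimately obtain b where b: "S \<inter> blk x \<subseteq> {b}" using le1_sub by metis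
  obtain j where j: "j < 5" "j \<noteq> att (T x)" "Inr (x,j) \<noteq> b" "\<not> GF_E V E T (Inr (x,j)) b"
    using pick[where T=T and x=x and b=b and V=V and E=E, OF T] by auto
  let ?v = "Inr (x,j) :: 'a + 'a \<times> nat"
  have "j < cst_leaf (fst (T x)) (snd (T x))" using leaf5[where T=T and x=x, OF T] j(1) by simp
  then have vV: "?v \<in> GF_V V T" using x unfolding GF_V_def by blast
  have vB: "?v \<in> blk x" using j by (auto simp: blk_def)
  have vS: "?v \<notin> S" using b j(3) vB by auto
  from S vV vS have "(\<exists>s\<in>S. GF_E V E T ?v s) \<or> 2 \<le> card {s\<in>S. dist2 (GF_V V T) (GF_E V E T) ?v s}"
    unfolding disj_dom_set_def by simp
  moreover have "\<not> (\<exists>s\<in>S. GF_E V E T ?v s)"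
  proof
    assume "\<exists>s\<in>S. GF_E V E T ?v s"
    then obtain s where "s \<in> S" "GF_E V E T ?v s" by blast
    moreover then have "s \<in> blk x" using E_Inr[where T=T and x=x, OF T] by blast
    ultimately show False using b j by blast
  qed
  moreover have sub: "{s\<in>S. dist2 (GF_V V T) (GF_E V E T) ?v s} \<subseteq> {b}"
  proof
    fix s assume "s \<in> {s\<in>S. dist2 (GF_V V T) (GF_E V E T) ?v s}"
    then have sS: "s \<in> S" and "dist2 (GF_V V T) (GF_E V E T) ?v s" by auto
    then obtain u where u1: "GF_E V E T ?v u" and u2: "GF_E V E T u s" unfolding dist2_def by blast
    have "u \<in> blk x" using E_Inr[where T=T and x=x, OF T u1] .
    then consider "u = Inl x" | k where "u = Inr (x,k)" by (auto simp: blk_def)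
    then have "s \<in> blk x"
    proof cases
      case 1
      then have "j = att (T x)" using Inr_Inl[where T=T and x=x, OF T] u1 by blast
      then show ?thesis using j(2) by simp
    next
      case 2 then show ?thesis using E_Inr[where T=T and x=x, OF T] u2 by blast
    qed
    then show "s \<in> {b}" using b sS by blast
  qed
  then have "card {s\<in>S. dist2 (GF_V V T) (GF_E V E T) ?v s} \<le> 1"
    using card_mono[of "{b}", OF _ sub] by simp
  ultimately show False by linarith
qed


lemma GF_V_eq:
  assumes T: "\<forall>x\<in>V. T x \<in> {(4,2),(5,1)}"
  shows "GF_V V T = Inl ` V \<union> Inr ` (V \<times> {..<(5::nat)})"
proof -
  have "{Inr (x, j) | x j. x \<in> V \<and> j < cst_leaf (fst (T x)) (snd (T x))} = Inr ` (V \<times> {..<(5::nat)})"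
  proof (intro equalityI subsetI)
    fix v assume "v \<in> {Inr (x, j) | x j. x \<in> V \<and> j < cst_leaf (fst (T x)) (snd (T x))}"
    then obtain x j where "v = Inr (x,j)" "x \<in> V" "j < cst_leaf (fst (T x)) (snd (T x))" by blast
    moreover then have "j < 5" using leaf5[where T=T and x=x] T by simp
    ultimately show "v \<in> Inr ` (V \<times> {..<(5::nat)})" by blast
  next
    fix v assume "v \<in> Inr ` (V \<times> {..<(5::nat)})"
    then obtain x j where "v = Inr (x,j)" "x \<in> V" "j < 5" by blast
    moreover then have "j < cst_leaf (fst (T x)) (snd (T x))" using leaf5[where T=T and x=x] T by simp
    ultimately show "v \<in> {Inr (x, j) | x j. x \<in> V \<and> j < cst_leaf (fst (T x)) (snd (T x))}" by blast
  qed
  then show ?thesis unfolding GF_V_def by (rule arg_cong)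
qed

lemma card_GF_V:
  assumes T: "\<forall>x\<in>V. T x \<in> {(4,2),(5,1)}" and fin: "finite V"
  shows "card (GF_V V T) = 6 * card V"
proof -
  have "card (Inl ` V \<union> Inr ` (V \<times> {..<(5::nat)})) = card (Inl ` V :: ('a + 'a \<times> nat) set) + card (Inr ` (V \<times> {..<(5::nat)}) :: ('a + 'a \<times> nat) set)"
    by (rule card_Un_disjoint) (use fin in auto)
  also have "\<dots> = card V + card (V \<times> {..<5::nat})"
    by (simp add: card_image)
  also have "\<dots> = 6 * card V" by (simp add: card_cartesian_product)
  finally show ?thesis using GF_V_eq[OF T] by simp
qed

lemma lower:
  assumes T: "\<forall>x\<in>V. T x \<in> {(4,2),(5,1)}" and fin: "finite V"
    and S: "disj_dom_set (GF_V V T) (GF_E V E T) S"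
  shows "2 * card V \<le> card S"
proof -
  have finG: "finite (GF_V V T)" using GF_V_eq[OF T] fin by simp
  have SG: "S \<subseteq> GF_V V T" using S by (simp add: disj_dom_set_def)
  have finS: "finite S" using finite_subset[OF SG finG] .
  have "2 * card V = (\<Sum>x\<in>V. (2::nat))" by simp
  also have "\<dots> \<le> (\<Sum>x\<in>V. card (S \<inter> blk x))"
    by (rule sum_mono) (use gadget[OF _ _ S finS] T in blast)
  also have "\<dots> = card (\<Union>x\<in>V. S \<inter> blk x)"
    by (rule card_UN_disjoint[symmetric]) (use fin finS in \<open>auto simp: blk_def\<close>)
  also have "\<dots> \<le> card S"
    by (rule card_mono[OF finS]) blast
  finally show ?thesis .
qed

definition S0 :: "'a set \<Rightarrow> ('a \<Rightarrow> nat \<times> nat) \<Rightarrow> ('a + 'a \<times> nat) set" where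
  "S0 V T = Inr ` ((\<lambda>x. (x,2)) ` V \<union> (\<lambda>x. (x, att (T x))) ` V)"

lemma att_ne2: "T x \<in> {(4,2),(5,1)} \<Longrightarrow> att (T x) \<noteq> 2 \<and> att (T x) < 5"
  by (auto simp: att_def)

lemma card_S0:
  assumes T: "\<forall>x\<in>V. T x \<in> {(4,2),(5,1)}" and fin: "finite V"
  shows "card (S0 V T) = 2 * card V"
proof -
  have "card (S0 V T) = card ((\<lambda>x. (x,2::nat)) ` V \<union> (\<lambda>x. (x, att (T x))) ` V)"
    unfolding S0_def by (rule card_image) simp
  also have "\<dots> = card ((\<lambda>x. (x,2::nat)) ` V) + card ((\<lambda>x. (x, att (T x))) ` V)"
    by (rule card_Un_disjoint) (use fin in \<open>auto simp: att_def split: if_splits\<close>)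
  also have "\<dots> = card V + card V"
    by (subst card_image, simp add: inj_on_def)+ simp
  finally show ?thesis by simp
qed

lemma S0_dom:
  assumes T: "\<forall>x\<in>V. T x \<in> {(4,2),(5,1)}"
  shows "disj_dom_set (GF_V V T) (GF_E V E T) (S0 V T)"
  unfolding disj_dom_set_def
proof (intro conjI ballI)
  have "\<forall>x\<in>V. att (T x) < 5" by (auto simp: att_def)
  then show "S0 V T \<subseteq> GF_V V T" unfolding GF_V_eq[OF T] S0_def by auto
next
  fix v assume v: "v \<in> GF_V V T - S0 V T"
  then have "v \<in> Inl ` V \<union> Inr ` (V \<times> {..<(5::nat)})" using GF_V_eq[OF T] by simp
  then consider x where "v = Inl x" "x \<in> V" | x j where "v = Inr (x,j)" "x \<in> V" "j < 5" by blast
  then show "(\<exists>s\<in>S0 V T. GF_E V E T v s) \<or> 2 \<le> card {s \<in> S0 V T. dist2 (GF_V V T) (GF_E V E T) v s}"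
  proof cases
    case 1
    have "Inr (x, att (T x)) \<in> S0 V T" using 1 unfolding S0_def by blast
    moreover have "GF_E V E T v (Inr (x, att (T x)))"
      using 1 T by (auto simp: att_def cst_edge_def cst_leaf_def)
    ultimately show ?thesis by blast
  next
    case 2
    have "j \<noteq> 2" "j \<noteq> att (T x)" using v 2 unfolding S0_def by auto
    define w where "w = (if j = 1 \<or> j = 3 then 2 else att (T x))"
    have "Inr (x, w) \<in> S0 V T" using 2 unfolding S0_def w_def by auto
    moreover have "GF_E V E T v (Inr (x, w))"
    proof -
      have "T x = (4,2) \<or> T x = (5,1)" using T 2 by auto
      moreover have "j=0 \<or> j=1 \<or> j=3 \<or> j=4" using 2 \<open>j\<noteq>2\<close> by auto
      ultimately show ?thesis using 2 \<open>j \<noteq> att (T x)\<close>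
        by (elim disjE) (simp_all add: w_def att_def cst_edge_def cst_leaf_def)
    qed
    ultimately show ?thesis by blast
  qed
qed

theorem mainTheorem3:
  fixes V :: "'a set" and E :: "'a \<Rightarrow> 'a \<Rightarrow> bool" and T :: "'a \<Rightarrow> nat \<times> nat"
  assumes "simple_graph V E"
    and "connected_graph V E"
    and "card V \<ge> 2"
    and "\<forall>x\<in>V. T x \<in> {(4, 2), (5, 1)}"
  shows "real (disj_dom_num (GF_V V T) (GF_E V E T)) = real (card (GF_V V T)) / 3"
proof -
  have fin: "finite V" using assms(1) by (simp add: simple_graph_def)
  have "disj_dom_num (GF_V V T) (GF_E V E T) = 2 * card V"
    unfolding disj_dom_num_def
  proof (rule Least_equality)
    show "\<exists>S. disj_dom_set (GF_V V T) (GF_E V E T) S \<and> card S = 2 * card V"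
      using S0_dom[OF assms(4)] card_S0[OF assms(4) fin] by blast
  next
    fix m assume "\<exists>S. disj_dom_set (GF_V V T) (GF_E V E T) S \<and> card S = m"
    then show "2 * card V \<le> m" using lower[OF assms(4) fin] by blast
  qed
  then show ?thesis using card_GF_V[OF assms(4) fin] by simp
qed

end
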